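(* Let $\Gamma$ be a metrized graph and $p$ a vertex of $\Gamma$. For an edge $e_i$ of $\Gamma$ with end points $p_i$ and $q_i$, $$r(p_i,p)+r(q_i,p)=2\,r_{\overline{\Gamma}_i}(p,\bar p_i)+\frac{L_i R_i}{L_i+R_i}-2\,\frac{L_i R_{a_i,p} R_{b_i,p}}{R_i(L_i+R_i)}.$$
   Context: A metrized graph $\Gamma$ is a finite connected graph (multiple edges and self-loops allowed) each of whose edges is identified with a closed segment of positive length, with a finite nonempty vertex set $V(\Gamma)$ containing every point of valence $\neq2$; $L_i$ is the length of $e_i$. $r$ (resp. $r_\beta$) is the effective resistance in $\Gamma$ (resp. $\beta$), edges being resistors of resistance equal to length. If $\Gamma-e_i$ (interior of $e_i$ deleted) is connected, $R_i$ is the effective resistance between $p_i,q_i$ in $\Gamma-e_i$, $R_{a_i,p}=\hat j_{p_i}(p,q_i)$, $R_{b_i,p}=\hat j_{q_i}(p,p_i)$ with $\hat j_z(x,y)$ the voltage function of $\Gamma-e_i$ (potential at $x$ when unit current enters at $y$ and exits at $z$, potential $0$ at $z$), so $R_{a_i,p}+R_{b_i,p}=R_i$. If $e_i$ is a bridge, $R_{a_i,p}=0,R_{b_i,p}=R_i$ when $p$ is in the component of $\Gamma-e_i$ containing $p_i$, and $R_{a_i,p}=R_i,R_{b_i,p}=0$ otherwise, and every expression involving $R_i$ is interpreted as its limit as $R_i\to\infty$. $\overline\Gamma_i$ is obtained by contracting $e_i$ to a point (identifying $p_i$ and $q_i$), with vertex set the image of $V(\Gamma)$, and $\bar p_i$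 denotes the vertex into which $p_i$ is contracted; $p$ also denotes its image in $\overline\Gamma_i$. *)

theory Defs
  imports "HOL-Analysis.Analysis"
begin

text \<open>A metrized graph is represented by its model: a finite vertex set V, a finite
  edge index set E, endpoint maps s t (edge e has end points s e, t e), and
  edge lengths L e > 0.  Each edge is a resistor of resistance L e.\<close>

definition adj :: "'e set \<Rightarrow> ('e \<Rightarrow> 'v) \<Rightarrow> ('e \<Rightarrow> 'v) \<Rightarrow> ('v \<times> 'v) set" where
  "adj E s t = {(s e, t e) | e. e \<in> E} \<union> {(t e, s e) | e. e \<in> E}"

definition graph_connected :: "'v set \<Rightarrow> 'e set \<Rightarrow> ('e \<Rightarrow> 'v) \<Rightarrow> ('e \<Rightarrow> 'v) \<Rightarrow> bool" where
  "graph_connected V E s t \<longleftrightarrow> (\<forall>u\<in>V. \<forall>v\<in>V. (u, v) \<in> (adj E s t)\<^sup>*)"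

definition metrized_graph ::
  "'v set \<Rightarrow> 'e set \<Rightarrow> ('e \<Rightarrow> 'v) \<Rightarrow> ('e \<Rightarrow> 'v) \<Rightarrow> ('e \<Rightarrow> real) \<Rightarrow> bool" where
  "metrized_graph V E s t L \<longleftrightarrow> finite V \<and> V \<noteq> {} \<and> finite E \<and>
     (\<forall>e\<in>E. s e \<in> V \<and> t e \<in> V \<and> L e > 0) \<and> graph_connected V E s t"

text \<open>Kirchhoff conditions: unit current enters at y, exits at z, potential 0 at z
  (and, for uniqueness, 0 off the vertex set).\<close>
definition kirchhoff ::
  "'v set \<Rightarrow> 'e set \<Rightarrow> ('e \<Rightarrow> 'v) \<Rightarrow> ('e \<Rightarrow> 'v) \<Rightarrow> ('e \<Rightarrow> real) \<Rightarrow> 'v \<Rightarrow> 'v \<Rightarrow> ('v \<Rightarrow> real) \<Rightarrow> bool" where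
  "kirchhoff V E s t L y z \<phi> \<longleftrightarrow> \<phi> z = 0 \<and> (\<forall>x. x \<notin> V \<longrightarrow> \<phi> x = 0) \<and>
     (\<forall>v\<in>V. (\<Sum>e\<in>{e\<in>E. s e = v}. (\<phi> v - \<phi> (t e)) / L e)
            + (\<Sum>e\<in>{e\<in>E. t e = v}. (\<phi> v - \<phi> (s e)) / L e)
          = (if v = y then 1 else 0) - (if v = z then 1 else 0))"

text \<open>voltage function j_z(x,y): potential at x when unit current enters at y and
  exits at z, with potential 0 at z.\<close>
definition voltage ::
  "'v set \<Rightarrow> 'e set \<Rightarrow> ('e \<Rightarrow> 'v) \<Rightarrow> ('e \<Rightarrow> 'v) \<Rightarrow> ('e \<Rightarrow> real) \<Rightarrow> 'v \<Rightarrow> 'v \<Rightarrow> 'v \<Rightarrow> real" where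
  "voltage V E s t L z x y = (THE \<phi>. kirchhoff V E s t L y z \<phi>) x"

definition eff_res ::
  "'v set \<Rightarrow> 'e set \<Rightarrow> ('e \<Rightarrow> 'v) \<Rightarrow> ('e \<Rightarrow> 'v) \<Rightarrow> ('e \<Rightarrow> real) \<Rightarrow> 'v \<Rightarrow> 'v \<Rightarrow> real" where
  "eff_res V E s t L x y = voltage V E s t L y x x"

definition contr_map :: "'v \<Rightarrow> 'v \<Rightarrow> 'v \<Rightarrow> 'v" where
  "contr_map p q v = (if v = q then p else v)"

end

theory Submission
  imports Defs "HOL-Library.Function_Algebras"
begin

definition lap :: "'e set \<Rightarrow> ('e \<Rightarrow> 'v) \<Rightarrow> ('e \<Rightarrow> 'v) \<Rightarrow> ('e \<Rightarrow> real) \<Rightarrow> ('v \<Rightarrow> real) \<Rightarrow> 'v \<Rightarrow> real" where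
  "lap E s t L \<phi> v = (\<Sum>e\<in>{e\<in>E. s e = v}. (\<phi> v - \<phi> (t e)) / L e)
            + (\<Sum>e\<in>{e\<in>E. t e = v}. (\<phi> v - \<phi> (s e)) / L e)"

definition wfg :: "'v set \<Rightarrow> 'e set \<Rightarrow> ('e \<Rightarrow> 'v) \<Rightarrow> ('e \<Rightarrow> 'v) \<Rightarrow> ('e \<Rightarrow> real) \<Rightarrow> bool" where
  "wfg V E s t L \<longleftrightarrow> finite V \<and> finite E \<and> (\<forall>e\<in>E. s e \<in> V \<and> t e \<in> V \<and> L e > 0) \<and> graph_connected V E s t"

definition sol :: "'v set \<Rightarrow> 'e set \<Rightarrow> ('e \<Rightarrow> 'v) \<Rightarrow> ('e \<Rightarrow> 'v) \<Rightarrow> ('e \<Rightarrow> real) \<Rightarrow> 'v \<Rightarrow> 'v \<Rightarrow> ('v \<Rightarrow> real) \<Rightarrow> bool" where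
  "sol V E s t L y z \<phi> \<longleftrightarrow> \<phi> z = 0 \<and> (\<forall>v\<in>V. lap E s t L \<phi> v = (if v = y then 1 else 0) - (if v = z then 1 else 0))"

lemma sum_group_src:
  assumes "finite V" "finite E" "\<forall>e\<in>E. s e \<in> V"
  shows "(\<Sum>v\<in>V. \<Sum>e\<in>{e\<in>E. s e = v}. h e) = (\<Sum>e\<in>E. (h e :: real))"
  using sum.group[of E V s h] assms by auto

lemma green:
  assumes "finite V" "finite E" "\<forall>e\<in>E. s e \<in> V \<and> t e \<in> V"
  shows "(\<Sum>v\<in>V. \<psi> v * lap E s t L \<phi> v) = (\<Sum>e\<in>E. (\<psi> (s e) - \<psi> (t e)) * (\<phi> (s e) - \<phi> (t e)) / L e)"
proof -
  have pt: "\<And>v. \<psi> v * lap E s t L \<phi> v =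
     (\<Sum>e\<in>{e\<in>E. s e = v}. \<psi> (s e) * ((\<phi> (s e) - \<phi> (t e)) / L e))
   + (\<Sum>e\<in>{e\<in>E. t e = v}. \<psi> (t e) * ((\<phi> (t e) - \<phi> (s e)) / L e))"
    unfolding lap_def distrib_left sum_distrib_left by simp
  have "(\<Sum>v\<in>V. \<psi> v * lap E s t L \<phi> v) =
     (\<Sum>v\<in>V. \<Sum>e\<in>{e\<in>E. s e = v}. \<psi> (s e) * ((\<phi> (s e) - \<phi> (t e)) / L e))
   + (\<Sum>v\<in>V. \<Sum>e\<in>{e\<in>E. t e = v}. \<psi> (t e) * ((\<phi> (t e) - \<phi> (s e)) / L e))"
    unfolding pt sum.distrib ..
  also have "\<dots> = (\<Sum>e\<in>E. \<psi> (s e) * ((\<phi> (s e) - \<phi> (t e)) / L e)) + (\<Sum>e\<in>E. \<psi> (t e) * ((\<phi> (t e) - \<phi> (s e)) / L e))"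
  proof -
    have s1: "\<forall>e\<in>E. s e \<in> V" "\<forall>e\<in>E. t e \<in> V" using assms(3) by auto
    show ?thesis by (simp only: sum_group_src[OF assms(1,2) s1(1)] sum_group_src[OF assms(1,2) s1(2)])
  qed
  also have "\<dots> = (\<Sum>e\<in>E. (\<psi> (s e) - \<psi> (t e)) * (\<phi> (s e) - \<phi> (t e)) / L e)"
    unfolding sum.distrib[symmetric] by (intro sum.cong refl) (simp only: times_divide_eq_right add_divide_distrib[symmetric], simp add: algebra_simps)
  finally show ?thesis .
qed

lemma lap_affine:
  "lap E s t L (\<lambda>x. \<alpha> * f x + \<beta> * g x + k) v = \<alpha> * lap E s t L f v + \<beta> * lap E s t L g v"
proof -
  have a: "\<And>A h. (\<Sum>e\<in>A. (\<alpha> * f v + \<beta> * g v + k - (\<alpha> * f (h e) + \<beta> * g (h e) + k)) / L e)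
     = \<alpha> * (\<Sum>e\<in>A. (f v - f (h e)) / L e) + \<beta> * (\<Sum>e\<in>A. (g v - g (h e)) / L e)"
    unfolding sum_distrib_left sum.distrib[symmetric] by (intro sum.cong refl) (simp only: times_divide_eq_right add_divide_distrib[symmetric], simp add: algebra_simps)
  show ?thesis unfolding lap_def a by (simp add: algebra_simps)
qed

lemma lap_cong:
  assumes "\<forall>e\<in>E. s e \<in> V \<and> t e \<in> V" "v \<in> V" "\<forall>x\<in>V. f x = g x"
  shows "lap E s t L f v = lap E s t L g v"
  unfolding lap_def using assms by (intro arg_cong2[where f="(+)"] sum.cong) auto

lemma rtrancl_const:
  assumes "(u, v) \<in> (adj E s t)\<^sup>*" "\<forall>e\<in>E. f (s e) = f (t e)"
  shows "f u = f v"
  using assms(1)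
proof induction
  case (step y z)
  then show ?case using assms(2) unfolding adj_def by auto
qed simp

lemma harmonic_const:
  assumes "wfg V E s t L" "\<forall>v\<in>V. lap E s t L \<phi> v = 0" "u \<in> V" "v \<in> V"
  shows "\<phi> u = \<phi> v"
proof -
  have fin: "finite V" "finite E" and sv: "\<forall>e\<in>E. s e \<in> V \<and> t e \<in> V" and Lp: "\<forall>e\<in>E. L e > 0"
    and con: "graph_connected V E s t" using assms(1) unfolding wfg_def by auto
  have "(\<Sum>v\<in>V. \<phi> v * lap E s t L \<phi> v) = 0"
    by (rule sum.neutral) (use assms(2) in simp)
  then have eq0: "(\<Sum>e\<in>E. (\<phi> (s e) - \<phi> (t e)) * (\<phi> (s e) - \<phi> (t e)) / L e) = 0"
    unfolding green[OF fin sv] .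
  have nn: "\<forall>e\<in>E. (\<phi> (s e) - \<phi> (t e)) * (\<phi> (s e) - \<phi> (t e)) / L e \<ge> 0"
  proof
    fix e assume "e \<in> E"
    then have "L e > 0" using Lp by blast
    then show "(\<phi> (s e) - \<phi> (t e)) * (\<phi> (s e) - \<phi> (t e)) / L e \<ge> 0"
      by (intro divide_nonneg_pos) simp_all
  qed
  have "\<forall>e\<in>E. (\<phi> (s e) - \<phi> (t e)) * (\<phi> (s e) - \<phi> (t e)) / L e = 0"
    using sum_nonneg_eq_0_iff[OF fin(2), of "\<lambda>e. (\<phi> (s e) - \<phi> (t e)) * (\<phi> (s e) - \<phi> (t e)) / L e"] nn eq0 by simp
  then have ed: "\<forall>e\<in>E. \<phi> (s e) = \<phi> (t e)"
  proof (intro ballI)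
    fix e assume h: "\<forall>e\<in>E. (\<phi> (s e) - \<phi> (t e)) * (\<phi> (s e) - \<phi> (t e)) / L e = 0" and e: "e \<in> E"
    then have "L e > 0" using Lp by blast
    moreover have "(\<phi> (s e) - \<phi> (t e)) * (\<phi> (s e) - \<phi> (t e)) / L e = 0" using h e by blast
    ultimately show "\<phi> (s e) = \<phi> (t e)" by simp
  qed
  have "(u, v) \<in> (adj E s t)\<^sup>*" using con assms(3,4) unfolding graph_connected_def by auto
  then show ?thesis using ed by (rule rtrancl_const)
qed

lemma lap_sum_zero:
  assumes "finite V" "finite E" "\<forall>e\<in>E. s e \<in> V \<and> t e \<in> V"
  shows "(\<Sum>v\<in>V. lap E s t L \<phi> v) = 0"
proof -
  have "(\<Sum>v\<in>V. lap E s t L \<phi> v) = (\<Sum>v\<in>V. 1 * lap E s t L \<phi> v)" by simp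
  also have "\<dots> = (\<Sum>e\<in>E. (1 - 1) * (\<phi> (s e) - \<phi> (t e)) / L e)"
    by (rule green[OF assms])
  also have "\<dots> = 0" by simp
  finally show ?thesis .
qed

lemma fun_sum_apply: "(sum g A) x = (\<Sum>a\<in>A. g a x)" for g :: "'a \<Rightarrow> 'v \<Rightarrow> real"
  by (induction A rule: infinite_finite_induct) auto

lemma exists_sol:
  fixes V :: "'v set"
  assumes G: "wfg V E s t L" and y: "y \<in> V" and z: "z \<in> V"
  shows "\<exists>\<phi>. sol V E s t L y z \<phi>"
proof -
  have fin: "finite V" "finite E" and sv: "\<forall>e\<in>E. s e \<in> V \<and> t e \<in> V"
    using G unfolding wfg_def by auto
  define sc :: "real \<Rightarrow> ('v\<Rightarrow>real) \<Rightarrow> ('v\<Rightarrow>real)" where "sc = (\<lambda>c f x. c * f x)"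
  interpret VS: vector_space sc
    by unfold_locales (auto simp: sc_def algebra_simps fun_eq_iff)
  define W where "W = V - {z}"
  define \<delta> :: "'v \<Rightarrow> 'v \<Rightarrow> real" where "\<delta> = (\<lambda>v x. if x = v then 1 else 0)"
  define B where "B = \<delta> ` W"
  define M where "M = (\<lambda>f v. if v \<in> W then lap E s t L f v else 0)"
  define S0 where "S0 = {f::'v\<Rightarrow>real. \<forall>x. x \<notin> W \<longrightarrow> f x = 0}"
  have finW: "finite W" using fin W_def by auto
  have finB: "finite B" using finW B_def by auto
  have sub: "VS.subspace S0"
    by (rule VS.subspaceI) (auto simp: S0_def sc_def)
  have BS: "B \<subseteq> S0" unfolding B_def S0_def \<delta>_def by auto
  have spanB: "VS.span B \<subseteq> S0" by (rule VS.span_minimal[OF BS sub])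
  have S0span: "S0 \<subseteq> VS.span B"
  proof
    fix f assume f: "f \<in> S0"
    have "f = (\<Sum>v\<in>W. sc (f v) (\<delta> v))"
    proof
      fix x
      have "(\<Sum>v\<in>W. sc (f v) (\<delta> v)) x = (\<Sum>v\<in>W. f v * \<delta> v x)"
        by (simp add: fun_sum_apply sc_def)
      also have "\<dots> = (\<Sum>v\<in>W. if v = x then f x else 0)"
        by (intro sum.cong) (auto simp: \<delta>_def)
      also have "\<dots> = f x" using f finW unfolding S0_def by (simp add: sum.delta)
      finally show "f x = (\<Sum>v\<in>W. sc (f v) (\<delta> v)) x" ..
    qed
    also have "\<dots> \<in> VS.span B"
      by (intro VS.span_sum VS.span_scale VS.span_base) (auto simp: B_def)
    finally show "f \<in> VS.span B" .
  qed
  have linM: "Vector_Spaces.linear sc sc M"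
    unfolding Vector_Spaces.linear_iff
  proof (intro conjI allI)
    show "vector_space sc" by unfold_locales
    show "vector_space sc" by unfold_locales
    fix f g :: "'v \<Rightarrow> real" and c :: real
    show "M (f + g) = M f + M g"
      using lap_affine[of E s t L 1 f 1 g 0] by (auto simp: M_def fun_eq_iff plus_fun_def)
    show "M (sc c f) = sc c (M f)"
      using lap_affine[of E s t L c f 0 g 0] by (auto simp: M_def fun_eq_iff sc_def)
  qed
  interpret LM: Vector_Spaces.linear sc sc M by (rule linM)
  have ker: "f = 0" if f: "f \<in> S0" "M f = 0" for f
  proof -
    have l1: "lap E s t L f v = 0" if "v \<in> W" for v
      using that fun_cong[OF f(2), of v] by (simp add: M_def)
    have "(\<Sum>v\<in>V. lap E s t L f v) = 0" by (rule lap_sum_zero[OF fin sv])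
    moreover have "(\<Sum>v\<in>V. lap E s t L f v) = lap E s t L f z + (\<Sum>v\<in>W. lap E s t L f v)"
      using z fin unfolding W_def by (simp add: sum.remove)
    ultimately have "lap E s t L f z = 0" using l1 by simp
    then have "\<forall>v\<in>V. lap E s t L f v = 0" using l1 W_def by auto
    then have "f v = f z" if "v \<in> V" for v using harmonic_const[OF G _ that z] by auto
    moreover have "f z = 0" using f(1) unfolding S0_def W_def by auto
    ultimately show "f = 0" using f(1) unfolding S0_def W_def by (auto simp: fun_eq_iff)
  qed
  have injM: "inj_on M (VS.span B)"
    using LM.inj_on_iff_eq_0[OF VS.subspace_span] ker spanB by auto
  have indB: "VS.independent B"
    unfolding VS.independent_explicit_module
  proof (intro allI impI)
    fix T u b assume T: "finite T" "T \<subseteq> B" "(\<Sum>v\<in>T. sc (u v) v) = 0" "b \<in> T"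
    then obtain w where w: "w \<in> W" "b = \<delta> w" unfolding B_def by auto
    have "0 = (\<Sum>v\<in>T. sc (u v) v) w" using T(3) by simp
    also have "\<dots> = (\<Sum>v\<in>T. u v * v w)" by (simp add: fun_sum_apply sc_def)
    also have "\<dots> = (\<Sum>v\<in>T. if v = b then u b else 0)"
    proof (intro sum.cong refl)
      fix v assume "v \<in> T"
      then obtain w' where w': "w' \<in> W" "v = \<delta> w'" using T(2) unfolding B_def by auto
      show "u v * v w = (if v = b then u b else 0)"
      proof (cases "w' = w")
        case True then show ?thesis using w w' by (simp add: \<delta>_def)
      next
        case False
        then have "v \<noteq> b" using w w' by (auto simp: \<delta>_def fun_eq_iff)
        then show ?thesis using w w' False by (auto simp: \<delta>_def)
      qed
    qed
    also have "\<dots> = u b" using T by (simp add: sum.delta)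
    finally show "u b = 0" by simp
  qed
  define MB where "MB = M ` B"
  have indMB: "VS.independent MB"
    unfolding MB_def by (rule LM.independent_injective_image[OF indB injM])
  have injB: "inj_on M B" using injM VS.span_superset inj_on_subset by blast
  have cardMB: "card MB = card B" unfolding MB_def using card_image[OF injB] .
  have finMB: "finite MB" using finB MB_def by auto
  have MBS: "MB \<subseteq> VS.span B"
  proof -
    have "MB \<subseteq> S0" unfolding MB_def S0_def M_def by auto
    then show ?thesis using S0span by auto
  qed
  have BMB: "B \<subseteq> VS.span MB"
  proof
    fix x assume x: "x \<in> B"
    show "x \<in> VS.span MB"
    proof (rule ccontr)
      assume nx: "x \<notin> VS.span MB"
      then have "x \<notin> MB" using VS.span_superset by blast
      have "VS.independent (insert x MB)" using VS.independent_insertI[OF nx indMB] .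
      moreover have "insert x MB \<subseteq> VS.span B" using MBS x VS.span_superset by auto
      ultimately have "card (insert x MB) \<le> card B"
        using VS.independent_span_bound[OF finB, of "insert x MB"] by simp
      moreover have "card (insert x MB) = card B + 1"
        using \<open>x \<notin> MB\<close> finMB cardMB by simp
      ultimately show False by simp
    qed
  qed
  have "VS.span B \<subseteq> VS.span MB" using VS.span_minimal[OF BMB VS.subspace_span] .
  also have "VS.span MB = M ` VS.span B" unfolding MB_def by (rule LM.span_image)
  finally have sur: "S0 \<subseteq> M ` VS.span B" using S0span by auto
  define g where "g = (\<lambda>v. if v \<in> W then (if v = y then 1 else 0) - (if v = z then 1 else (0::real)) else 0)"
  have "g \<in> S0" unfolding g_def S0_def by auto
  then obtain f where f: "f \<in> VS.span B" "M f = g" using sur by auto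
  have fS: "f \<in> S0" using f spanB by auto
  have l1: "lap E s t L f v = (if v = y then 1 else 0) - (if v = z then 1 else 0)" if "v \<in> W" for v
    using that fun_cong[OF f(2), of v] by (simp add: M_def g_def)
  have "(\<Sum>v\<in>V. lap E s t L f v) = 0" by (rule lap_sum_zero[OF fin sv])
  moreover have "(\<Sum>v\<in>V. lap E s t L f v) = lap E s t L f z + (\<Sum>v\<in>W. lap E s t L f v)"
    using z fin unfolding W_def by (simp add: sum.remove)
  moreover have "(\<Sum>v\<in>W. lap E s t L f v) = (\<Sum>v\<in>W. (if v = y then 1 else 0))"
    using l1 by (intro sum.cong) (auto simp: W_def)
  moreover have "(\<Sum>v\<in>W. (if v = y then 1 else 0)::real) = (if y = z then 0 else 1)"
    using finW y unfolding W_def by (simp add: sum.delta')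
  ultimately have "lap E s t L f z = (if y = z then 0 else -1)" by (auto split: if_splits)
  then have "\<forall>v\<in>V. lap E s t L f v = (if v = y then 1 else 0) - (if v = z then 1 else 0)"
    using l1 W_def by auto
  moreover have "f z = 0" using fS unfolding S0_def W_def by auto
  ultimately show ?thesis unfolding sol_def by blast
qed

lemma lap_diff: "lap E s t L (\<lambda>x. f x - g x) v = lap E s t L f v - lap E s t L g v"
  using lap_affine[of E s t L 1 f "-1" g 0 v] by simp

lemma lap_const_add: "lap E s t L (\<lambda>x. f x + k) v = lap E s t L f v"
  using lap_affine[of E s t L 1 f 0 f k v] by simp

lemma wfgD: assumes "wfg V E s t L"
  shows "finite V" "finite E" "\<forall>e\<in>E. s e \<in> V \<and> t e \<in> V" "\<forall>e\<in>E. L e > 0" "graph_connected V E s t"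
  using assms unfolding wfg_def by auto

lemma kirch_iff: "kirchhoff V E s t L y z \<phi> \<longleftrightarrow> \<phi> z = 0 \<and> (\<forall>x. x \<notin> V \<longrightarrow> \<phi> x = 0) \<and>
     (\<forall>v\<in>V. lap E s t L \<phi> v = (if v = y then 1 else 0) - (if v = z then 1 else 0))"
  unfolding kirchhoff_def lap_def ..

lemma sol_kirch:
  assumes G: "wfg V E s t L" and S: "sol V E s t L y z \<phi>"
  shows "kirchhoff V E s t L y z (\<lambda>x. if x \<in> V then \<phi> x else 0)"
proof -
  have sv: "\<forall>e\<in>E. s e \<in> V \<and> t e \<in> V" using wfgD[OF G] by auto
  have "lap E s t L (\<lambda>x. if x \<in> V then \<phi> x else 0) v = lap E s t L \<phi> v" if "v \<in> V" for v
    by (rule lap_cong[OF sv that]) simp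
  then show ?thesis using S unfolding kirch_iff sol_def by auto
qed

lemma kirch_unique:
  assumes G: "wfg V E s t L" and z: "z \<in> V"
    and K1: "kirchhoff V E s t L y z \<phi>1" and K2: "kirchhoff V E s t L y z \<phi>2"
  shows "\<phi>1 = \<phi>2"
proof -
  have l1: "\<forall>v\<in>V. lap E s t L (\<lambda>x. \<phi>1 x - \<phi>2 x) v = 0"
    using K1 K2 unfolding kirch_iff lap_diff by auto
  have d: "\<phi>1 v - \<phi>2 v = \<phi>1 z - \<phi>2 z" if "v \<in> V" for v
    using harmonic_const[OF G l1 that z] .
  show ?thesis
  proof
    fix x show "\<phi>1 x = \<phi>2 x"
    proof (cases "x \<in> V")
      case True then show ?thesis using d[OF True] K1 K2 unfolding kirch_iff by simp
    next
      case False then show ?thesis using K1 K2 unfolding kirch_iff by simp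
    qed
  qed
qed

lemma volt_eq:
  assumes G: "wfg V E s t L" and z: "z \<in> V" and S: "sol V E s t L y z \<phi>" and x: "x \<in> V"
  shows "voltage V E s t L z x y = \<phi> x"
proof -
  let ?K = "\<lambda>x. if x \<in> V then \<phi> x else 0"
  have K: "kirchhoff V E s t L y z ?K" by (rule sol_kirch[OF G S])
  have "(THE \<phi>. kirchhoff V E s t L y z \<phi>) = ?K"
    using K kirch_unique[OF G z] by (intro the_equality) auto
  then show ?thesis unfolding voltage_def using x by simp
qed

lemma sum_delta2:
  assumes "finite V" "y \<in> V" "z \<in> V"
  shows "(\<Sum>v\<in>V. h v * ((if v = y then 1 else 0) - (if v = z then 1 else 0))) = h y - (h z :: real)"
proof -
  have "(\<Sum>v\<in>V. h v * ((if v = y then 1 else 0) - (if v = z then 1 else 0)))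
      = (\<Sum>v\<in>V. (if v = y then h v else 0)) - (\<Sum>v\<in>V. (if v = z then h v else 0))"
    unfolding sum_subtractf[symmetric] by (intro sum.cong) auto
  also have "\<dots> = h y - h z" using assms by (simp add: sum.delta')
  finally show ?thesis .
qed

lemma recip:
  assumes G: "wfg V E s t L" and S1: "sol V E s t L y z f" and S2: "sol V E s t L y' z' h"
    and V: "y \<in> V" "z \<in> V" "y' \<in> V" "z' \<in> V"
  shows "h y - h z = f y' - f z'"
proof -
  have fin: "finite V" "finite E" and sv: "\<forall>e\<in>E. s e \<in> V \<and> t e \<in> V" using wfgD[OF G] by auto
  have "h y - h z = (\<Sum>v\<in>V. h v * lap E s t L f v)"
    using S1 sum_delta2[OF fin(1) V(1,2), of h] unfolding sol_def by (metis (no_types, lifting) sum.cong)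
  also have "\<dots> = (\<Sum>e\<in>E. (h (s e) - h (t e)) * (f (s e) - f (t e)) / L e)"
    by (rule green[OF fin sv])
  also have "\<dots> = (\<Sum>e\<in>E. (f (s e) - f (t e)) * (h (s e) - h (t e)) / L e)"
    by (simp add: mult.commute)
  also have "\<dots> = (\<Sum>v\<in>V. f v * lap E s t L h v)"
    by (rule green[OF fin sv, symmetric])
  also have "\<dots> = f y' - f z'"
    using S2 sum_delta2[OF fin(1) V(3,4), of f] unfolding sol_def by (metis (no_types, lifting) sum.cong)
  finally show ?thesis .
qed

lemma lap_edge:
  assumes "finite E" "e \<in> E"
  shows "lap E s t L \<phi> v = lap (E - {e}) s t L \<phi> v
     + (if s e = v then (\<phi> v - \<phi> (t e)) / L e else 0) + (if t e = v then (\<phi> v - \<phi> (s e)) / L e else 0)"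
proof -
  have E: "E = insert e (E - {e})" using assms by auto
  have A: "\<And>g (h::'a \<Rightarrow> 'b) (F::'a\<Rightarrow>real). (\<Sum>x\<in>{x\<in>E. h x = v}. F x) = (\<Sum>x\<in>{x\<in>E-{e}. h x = v}. F x) + (if h e = v then F e else 0)"
  proof -
    fix h :: "'a \<Rightarrow> 'b" and F :: "'a\<Rightarrow>real"
    show "(\<Sum>x\<in>{x\<in>E. h x = v}. F x) = (\<Sum>x\<in>{x\<in>E-{e}. h x = v}. F x) + (if h e = v then F e else 0)"
    proof (cases "h e = v")
      case True
      then have "{x\<in>E. h x = v} = insert e {x\<in>E-{e}. h x = v}" using assms by auto
      then show ?thesis using True assms by simp
    next
      case False
      then have "{x\<in>E. h x = v} = {x\<in>E-{e}. h x = v}" by auto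
      then show ?thesis using False by simp
    qed
  qed
  show ?thesis unfolding lap_def A by simp
qed

lemma contr_set:
  assumes "a \<noteq> b"
  shows "{e\<in>E. contr_map a b (h e) = a} = {e\<in>E. h e = a} \<union> {e\<in>E. h e = b}"
    and "v \<noteq> a \<Longrightarrow> v \<noteq> b \<Longrightarrow> {e\<in>E. contr_map a b (h e) = v} = {e\<in>E. h e = v}"
  using assms unfolding contr_map_def by auto

lemma contr_lap:
  assumes ab: "a \<noteq> b" and vb: "v \<noteq> b" and fin: "finite E"
  shows "lap E (contr_map a b \<circ> s) (contr_map a b \<circ> t) L \<psi> v =
    (if v = a then lap E s t L (\<psi> \<circ> contr_map a b) a + lap E s t L (\<psi> \<circ> contr_map a b) b
     else lap E s t L (\<psi> \<circ> contr_map a b) v)"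
proof (cases "v = a")
  case True
  have ca: "contr_map a b a = a" "contr_map a b b = a" using ab unfolding contr_map_def by auto
  have U: "\<And>h F. (\<Sum>e\<in>{e\<in>E. contr_map a b (h e) = a}. F e) = (\<Sum>e\<in>{e\<in>E. h e = a}. F e) + (\<Sum>e\<in>{e\<in>E. h e = b}. (F e :: real))"
    unfolding contr_set(1)[OF ab] using fin ab by (intro sum.union_disjoint) auto
  show ?thesis unfolding lap_def True using U ca by simp
next
  case False
  have cv: "contr_map a b v = v" using vb unfolding contr_map_def by auto
  show ?thesis unfolding lap_def o_def contr_set(2)[OF ab False vb, of E s] contr_set(2)[OF ab False vb, of E t]
    using False cv by simp
qed

lemma adj_contr:
  assumes "(u, v) \<in> (adj E s t)\<^sup>*" "e0 \<in> E"
  shows "(contr_map (s e0) (t e0) u, contr_map (s e0) (t e0) v)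
     \<in> (adj (E - {e0}) (contr_map (s e0) (t e0) \<circ> s) (contr_map (s e0) (t e0) \<circ> t))\<^sup>*"
  using assms(1)
proof induction
  case base then show ?case by simp
next
  case (step y z)
  let ?c = "contr_map (s e0) (t e0)"
  from step(2) obtain e where e: "e \<in> E" "(y, z) = (s e, t e) \<or> (y, z) = (t e, s e)"
    unfolding adj_def by auto
  show ?case
  proof (cases "e = e0")
    case True
    then have "?c y = ?c z" using e unfolding contr_map_def by auto
    then show ?thesis using step(3) by simp
  next
    case False
    then have "(?c y, ?c z) \<in> adj (E - {e0}) (?c \<circ> s) (?c \<circ> t)"
      using e unfolding adj_def by auto
    then show ?thesis by (rule rtrancl_into_rtrancl[OF step(3)])
  qed
qed

lemma conn_contr:
  assumes "graph_connected V E s t" "e0 \<in> E"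
  shows "graph_connected (contr_map (s e0) (t e0) ` V) (E - {e0}) (contr_map (s e0) (t e0) \<circ> s) (contr_map (s e0) (t e0) \<circ> t)"
  unfolding graph_connected_def
proof (intro ballI)
  fix u' v' assume "u' \<in> contr_map (s e0) (t e0) ` V" "v' \<in> contr_map (s e0) (t e0) ` V"
  then obtain u v where uv: "u \<in> V" "v \<in> V" "u' = contr_map (s e0) (t e0) u" "v' = contr_map (s e0) (t e0) v"
    by auto
  have "(u, v) \<in> (adj E s t)\<^sup>*" using assms(1) uv unfolding graph_connected_def by auto
  from adj_contr[OF this assms(2)] show "(u', v') \<in> (adj (E - {e0}) (contr_map (s e0) (t e0) \<circ> s) (contr_map (s e0) (t e0) \<circ> t))\<^sup>*"
    using uv by simp
qed

lemma adj_sym: "(x, y) \<in> adj E s t \<Longrightarrow> (y, x) \<in> adj E s t"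
  unfolding adj_def by auto

lemma adj_rtrancl_sym:
  assumes "(u, v) \<in> (adj E s t)\<^sup>*" shows "(v, u) \<in> (adj E s t)\<^sup>*"
  using assms
proof induction
  case (step y z)
  then show ?case using converse_rtrancl_into_rtrancl[OF adj_sym[OF step(2)] step(3)] by simp
qed simp

lemma reach_H:
  assumes "(x, u) \<in> (adj E s t)\<^sup>*" "(a, x) \<in> (adj (E - {e0}) s t)\<^sup>*"
    "(a, b) \<in> (adj (E - {e0}) s t)\<^sup>*" "s e0 = a" "t e0 = b"
  shows "(a, u) \<in> (adj (E - {e0}) s t)\<^sup>*"
  using assms(1)
proof induction
  case base then show ?case using assms(2) .
next
  case (step y z)
  from step(2) obtain e where e: "e \<in> E" "(y, z) = (s e, t e) \<or> (y, z) = (t e, s e)"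
    unfolding adj_def by auto
  show ?case
  proof (cases "e = e0")
    case True
    then have "z = a \<or> z = b" using e assms(4,5) by auto
    then show ?thesis using assms(3) by auto
  next
    case False
    then have "(y, z) \<in> adj (E - {e0}) s t" using e unfolding adj_def by auto
    then show ?thesis by (rule rtrancl_into_rtrancl[OF step(3)])
  qed
qed

lemma comp_closed:
  "\<forall>e\<in>E. s e \<in> {v. (a, v) \<in> (adj E s t)\<^sup>*} \<longleftrightarrow> t e \<in> {v. (a, v) \<in> (adj E s t)\<^sup>*}"
proof
  fix e assume e: "e \<in> E"
  have "(s e, t e) \<in> adj E s t" "(t e, s e) \<in> adj E s t" using e unfolding adj_def by auto
  then show "s e \<in> {v. (a, v) \<in> (adj E s t)\<^sup>*} \<longleftrightarrow> t e \<in> {v. (a, v) \<in> (adj E s t)\<^sup>*}"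
    using rtrancl_into_rtrancl[of a "s e" "adj E s t" "t e"] rtrancl_into_rtrancl[of a "t e" "adj E s t" "s e"]
    by auto
qed

lemma lap_ind:
  assumes "\<forall>e\<in>E. s e \<in> X \<longleftrightarrow> t e \<in> X"
  shows "lap E s t L (\<lambda>x. if x \<in> X then 1 else 0) v = 0"
proof -
  have "(\<Sum>e\<in>{e\<in>E. s e = v}. ((if v \<in> X then 1 else 0) - (if t e \<in> X then 1 else 0)) / L e) = 0"
    using assms by (intro sum.neutral) auto
  moreover have "(\<Sum>e\<in>{e\<in>E. t e = v}. ((if v \<in> X then 1 else 0) - (if s e \<in> X then 1 else 0)) / L e) = 0"
    using assms by (intro sum.neutral) auto
  ultimately show ?thesis unfolding lap_def by simp
qed

lemma sum_closed:
  assumes fin: "finite V" "finite E" and sv: "\<forall>e\<in>E. s e \<in> V \<and> t e \<in> V"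
    and cl: "\<forall>e\<in>E. s e \<in> X \<longleftrightarrow> t e \<in> X" and XV: "X \<subseteq> V"
  shows "(\<Sum>v\<in>X. lap E s t L \<phi> v) = 0"
proof -
  have "(\<Sum>v\<in>X. lap E s t L \<phi> v) = (\<Sum>v\<in>V. (if v \<in> X then 1 else 0) * lap E s t L \<phi> v)"
  proof -
    have "(\<Sum>v\<in>V. (if v \<in> X then 1 else 0) * lap E s t L \<phi> v) = (\<Sum>v\<in>V. if v \<in> X then lap E s t L \<phi> v else 0)"
      by (intro sum.cong) auto
    also have "\<dots> = (\<Sum>v\<in>V \<inter> X. lap E s t L \<phi> v)" using sum.inter_restrict[OF fin(1)] by metis
    also have "V \<inter> X = X" using XV by auto
    finally show ?thesis by simp
  qed
  also have "\<dots> = (\<Sum>e\<in>E. ((if s e \<in> X then 1 else 0) - (if t e \<in> X then 1 else 0)) * (\<phi> (s e) - \<phi> (t e)) / L e)"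
    by (rule green[OF fin sv])
  also have "\<dots> = 0" using cl by (intro sum.neutral) auto
  finally show ?thesis .
qed

lemma sol_zero: "sol V E s t L a a (\<lambda>_. 0)"
  unfolding sol_def lap_def by simp

lemma sol_from_H:
  assumes "finite E" "e \<in> E" "\<phi> z = 0"
    and "\<forall>v\<in>V. lap (E - {e}) s t L \<phi> v + (if s e = v then (\<phi> v - \<phi> (t e)) / L e else 0)
            + (if t e = v then (\<phi> v - \<phi> (s e)) / L e else 0)
          = (if v = y then 1 else 0) - (if v = z then 1 else 0)"
  shows "sol V E s t L y z \<phi>"
  unfolding sol_def lap_edge[OF assms(1,2)] using assms(3,4) by simp

lemma sol_pos:
  assumes G: "wfg V E s t L" and yz: "y \<noteq> z" "y \<in> V" "z \<in> V" and S: "sol V E s t L y z f"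
  shows "f y > 0"
proof -
  have fin: "finite V" "finite E" and sv: "\<forall>e\<in>E. s e \<in> V \<and> t e \<in> V" and Lp: "\<forall>e\<in>E. L e > 0"
    using wfgD[OF G] by auto
  have "f y - f z = (\<Sum>v\<in>V. f v * lap E s t L f v)"
    using S sum_delta2[OF fin(1) yz(2,3), of f] unfolding sol_def by (metis (no_types, lifting) sum.cong)
  also have "\<dots> = (\<Sum>e\<in>E. (f (s e) - f (t e)) * (f (s e) - f (t e)) / L e)"
    by (rule green[OF fin sv])
  finally have eq: "f y = (\<Sum>e\<in>E. (f (s e) - f (t e)) * (f (s e) - f (t e)) / L e)"
    using S unfolding sol_def by simp
  have nn: "\<forall>e\<in>E. (f (s e) - f (t e)) * (f (s e) - f (t e)) / L e \<ge> 0"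
  proof
    fix e assume "e \<in> E"
    then have "L e > 0" using Lp by blast
    then show "(f (s e) - f (t e)) * (f (s e) - f (t e)) / L e \<ge> 0"
      by (intro divide_nonneg_pos) simp_all
  qed
  have "f y \<ge> 0" unfolding eq using nn by (intro sum_nonneg) auto
  moreover have "f y \<noteq> 0"
  proof
    assume "f y = 0"
    then have "\<forall>e\<in>E. (f (s e) - f (t e)) * (f (s e) - f (t e)) / L e = 0"
      using sum_nonneg_eq_0_iff[OF fin(2), of "\<lambda>e. (f (s e) - f (t e)) * (f (s e) - f (t e)) / L e"] nn eq by simp
    then have ed: "\<forall>e\<in>E. f (s e) = f (t e)"
    proof (intro ballI)
      fix e assume h: "\<forall>e\<in>E. (f (s e) - f (t e)) * (f (s e) - f (t e)) / L e = 0" and e: "e \<in> E"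
      then have "L e > 0" using Lp by blast
      moreover have "(f (s e) - f (t e)) * (f (s e) - f (t e)) / L e = 0" using h e by blast
      ultimately show "f (s e) = f (t e)" by simp
    qed
    have "lap E s t L f y = (\<Sum>e\<in>{e\<in>E. s e = y}. (f (s e) - f (t e)) / L e) + (\<Sum>e\<in>{e\<in>E. t e = y}. (f (t e) - f (s e)) / L e)"
      unfolding lap_def by (intro arg_cong2[where f="(+)"] sum.cong) auto
    also have "\<dots> = 0 + 0" by (intro arg_cong2[where f="(+)"] sum.neutral) (use ed in auto)
    finally have "lap E s t L f y = 0" by simp
    moreover have "lap E s t L f y = 1" using S yz unfolding sol_def by auto
    ultimately show False by simp
  qed
  ultimately show ?thesis by simp
qed

lemma alg:
  fixes A ub u'a u'b gp gb wp R l :: real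
  assumes R: "R > 0" and l: "l > 0"
   and hA: "gp = A" and hB: "gb = R - wp" and hC: "ub = A - R + wp"
   and hD: "u'b = u'a + wp" and hE: "u'a = ub"
  shows "(A - (A - ub)/(l + R) * (R - wp)) + (u'b - (u'a - u'b)/(l+R) * (0 - wp))
       = 2 * (gp + gb / R * (wp - R)) + l * R / (l + R) - 2 * (l * (R - wp) * wp / (R * (l + R)))"
proof -
  have q: "inverse (l + R) * (l + R) = 1" and r: "inverse R * R = 1" using R l by auto
  show ?thesis unfolding divide_inverse inverse_mult_distrib using q r hA hB hC hD hE
    by algebra
qed

lemma edge_add:
  assumes fin: "finite E" and e: "e \<in> E" and ab: "a \<noteq> b" and se: "s e = a" "t e = b"
    and Lp: "L e > 0" and R: "R \<ge> 0"
    and Su: "sol V (E-{e}) s t L y z u" and Sw: "sol V (E-{e}) s t L a b w" and Rw: "R = w a"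
  shows "sol V E s t L y z (\<lambda>x. u x - (u a - u b) / (L e + R) * (w x - w z))"
proof -
  define I where "I = (u a - u b) / (L e + R)"
  have pos: "L e + R > 0" using Lp R by simp
  have II: "I * (L e + R) = u a - u b" unfolding I_def using pos by simp
  have wb: "w b = 0" and uz: "u z = 0" using Su Sw unfolding sol_def by auto
  let ?p = "\<lambda>x. u x - I * (w x - w z)"
  have peq: "?p = (\<lambda>x. 1 * u x + (-I) * w x + I * w z)" by (simp add: fun_eq_iff algebra_simps)
  have L1: "lap (E-{e}) s t L ?p v = lap (E-{e}) s t L u v - I * lap (E-{e}) s t L w v" for v
    unfolding peq lap_affine by simp
  have "?p a - ?p b = (u a - u b) - I * (w a - w b)" by (simp add: algebra_simps)
  also have "\<dots> = I * (L e + R) - I * R" unfolding II using wb Rw by simp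
  also have "\<dots> = I * L e" by (simp add: algebra_simps)
  finally have d: "?p a - ?p b = I * L e" .
  have d1: "(?p a - ?p b) / L e = I" unfolding d using Lp by simp
  have "?p b - ?p a = - (I * L e)" using d by linarith
  then have d2: "(?p b - ?p a) / L e = - I" using Lp by simp
  have "sol V E s t L y z ?p"
  proof (rule sol_from_H[OF fin e])
    show "?p z = 0" using uz by simp
    show "\<forall>v\<in>V. lap (E - {e}) s t L ?p v + (if s e = v then (?p v - ?p (t e)) / L e else 0)
            + (if t e = v then (?p v - ?p (s e)) / L e else 0)
          = (if v = y then 1 else 0) - (if v = z then 1 else 0)"
    proof
      fix v assume v: "v \<in> V"
      have lu: "lap (E-{e}) s t L u v = (if v = y then 1 else 0) - (if v = z then 1 else 0)"
        and lw: "lap (E-{e}) s t L w v = (if v = a then 1 else 0) - (if v = b then 1 else 0)"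
        using Su Sw v unfolding sol_def by auto
      show "lap (E - {e}) s t L ?p v + (if s e = v then (?p v - ?p (t e)) / L e else 0)
            + (if t e = v then (?p v - ?p (s e)) / L e else 0)
          = (if v = y then 1 else 0) - (if v = z then 1 else 0)"
      proof (cases "v = a")
        case True
        then show ?thesis unfolding L1 lu lw se using ab d1 by simp
      next
        case False
        show ?thesis
        proof (cases "v = b")
          case True
          then show ?thesis unfolding L1 lu lw se using ab d2 by simp
        next
          case False
          then show ?thesis unfolding L1 lu lw se using \<open>v \<noteq> a\<close> by simp
        qed
      qed
    qed
  qed
  then show ?thesis unfolding I_def .
qed

lemma contr_sol:
  assumes fin: "finite E'" and ab: "a \<noteq> b" and pab: "\<phi> a = 0" "\<phi> b = 0"
    and L1: "\<forall>v\<in>V. v \<noteq> a \<longrightarrow> v \<noteq> b \<longrightarrow> lap E' s t L \<phi> v = (if v = p then 1 else 0)"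
    and L2: "lap E' s t L \<phi> a + lap E' s t L \<phi> b = (if p = a \<or> p = b then 1 else 0) - 1"
  shows "sol (contr_map a b ` V) E' (contr_map a b \<circ> s) (contr_map a b \<circ> t) L (contr_map a b p) a \<phi>"
  unfolding sol_def
proof (intro conjI ballI)
  have pc: "\<phi> \<circ> contr_map a b = \<phi>" using pab by (auto simp: fun_eq_iff contr_map_def)
  show "\<phi> a = 0" by (rule pab(1))
  fix v assume "v \<in> contr_map a b ` V"
  then obtain x where x: "x \<in> V" "v = contr_map a b x" by auto
  have vb: "v \<noteq> b" using x ab unfolding contr_map_def by auto
  have LL: "lap E' (contr_map a b \<circ> s) (contr_map a b \<circ> t) L \<phi> v =
      (if v = a then lap E' s t L \<phi> a + lap E' s t L \<phi> b else lap E' s t L \<phi> v)"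
    using contr_lap[OF ab vb fin, of s t L \<phi>] unfolding pc .
  show "lap E' (contr_map a b \<circ> s) (contr_map a b \<circ> t) L \<phi> v =
      (if v = contr_map a b p then 1 else 0) - (if v = a then 1 else 0)"
  proof (cases "v = a")
    case True
    have "(contr_map a b p = a) \<longleftrightarrow> (p = a \<or> p = b)" unfolding contr_map_def by auto
    then show ?thesis unfolding LL using True L2 by auto
  next
    case False
    then have vx: "v = x" using x unfolding contr_map_def by (auto split: if_splits)
    have "(v = contr_map a b p) \<longleftrightarrow> v = p" using False vb unfolding contr_map_def by auto
    then show ?thesis unfolding LL using False vb L1 x vx by auto
  qed
qed

lemma mg_wfg:
  assumes "metrized_graph V E s t L"
  shows "wfg V E s t L" "finite V" "finite E" "\<forall>e\<in>E. s e \<in> V \<and> t e \<in> V" "\<forall>e\<in>E. L e > 0"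
    "graph_connected V E s t"
  using assms unfolding metrized_graph_def wfg_def by auto

lemma wfg_minus:
  assumes "metrized_graph V E s t L" "graph_connected V (E - {e}) s t"
  shows "wfg V (E - {e}) s t L"
  using assms unfolding metrized_graph_def wfg_def by auto

lemma wfg_contr:
  assumes "metrized_graph V E s t L" "e \<in> E"
  shows "wfg (contr_map (s e) (t e) ` V) (E - {e}) (contr_map (s e) (t e) \<circ> s) (contr_map (s e) (t e) \<circ> t) L"
proof -
  have "graph_connected (contr_map (s e) (t e) ` V) (E - {e}) (contr_map (s e) (t e) \<circ> s) (contr_map (s e) (t e) \<circ> t)"
    using conn_contr[OF mg_wfg(6)[OF assms(1)] assms(2)] .
  moreover have "\<forall>x\<in>E - {e}. contr_map (s e) (t e) (s x) \<in> contr_map (s e) (t e) ` V \<and>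
      contr_map (s e) (t e) (t x) \<in> contr_map (s e) (t e) ` V \<and> L x > 0"
    using assms(1) unfolding metrized_graph_def by auto
  ultimately show ?thesis using assms(1) unfolding metrized_graph_def wfg_def by auto
qed

lemma nonbridge:
  assumes MG: "metrized_graph V E s t L" and pV: "p \<in> V" and eE: "e \<in> E"
    and Hc: "graph_connected V (E - {e}) s t" and sa: "s e = a" and tb: "t e = b"
  shows "eff_res V E s t L a p + eff_res V E s t L b p =
     2 * eff_res (contr_map a b ` V) (E - {e}) (contr_map a b \<circ> s) (contr_map a b \<circ> t) L (contr_map a b p) a
     + L e * eff_res V (E - {e}) s t L a b / (L e + eff_res V (E - {e}) s t L a b)
     - 2 * (L e * voltage V (E - {e}) s t L a p b * voltage V (E - {e}) s t L b p a
        / (eff_res V (E - {e}) s t L a b * (L e + eff_res V (E - {e}) s t L a b)))"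
proof -
  have wG: "wfg V E s t L" and fin: "finite V" "finite E" and sv: "\<forall>e\<in>E. s e \<in> V \<and> t e \<in> V"
    and Lp: "\<forall>e\<in>E. L e > 0" using mg_wfg[OF MG] by auto
  have wH: "wfg V (E - {e}) s t L" by (rule wfg_minus[OF MG Hc])
  have aV: "a \<in> V" and bV: "b \<in> V" using sv eE sa tb by auto
  have le: "L e > 0" using Lp eE by auto
  have wB: "wfg (contr_map a b ` V) (E - {e}) (contr_map a b \<circ> s) (contr_map a b \<circ> t) L"
    using wfg_contr[OF MG eE] sa tb by simp
  have finE': "finite (E - {e})" using fin by auto
  obtain u where u: "sol V (E - {e}) s t L a p u" using exists_sol[OF wH aV pV] by auto
  obtain g where g: "sol V (E - {e}) s t L p a g" using exists_sol[OF wH pV aV] by auto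
  have gp: "g p = u a"
    using recip[OF wH u g aV pV pV aV] u g unfolding sol_def by simp
  show ?thesis
  proof (cases "a = b")
    case True
    have c: "contr_map a b = (\<lambda>x. x)" using True by (auto simp: contr_map_def fun_eq_iff)
    have uG: "sol V E s t L a p u"
    proof (rule sol_from_H[OF fin(2) eE])
      show "u p = 0" using u unfolding sol_def by simp
      show "\<forall>v\<in>V. lap (E - {e}) s t L u v + (if s e = v then (u v - u (t e)) / L e else 0)
            + (if t e = v then (u v - u (s e)) / L e else 0)
          = (if v = a then 1 else 0) - (if v = p then 1 else 0)"
        using u True sa tb unfolding sol_def by auto
    qed
    have r1: "eff_res V E s t L a p = u a" unfolding eff_res_def by (rule volt_eq[OF wG pV uG aV])
    have r2: "eff_res (contr_map a b ` V) (E - {e}) (contr_map a b \<circ> s) (contr_map a b \<circ> t) L (contr_map a b p) a = g p"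
      unfolding c eff_res_def using volt_eq[OF wH aV g pV] by (simp add: o_def)
    have r3: "eff_res V (E - {e}) s t L a b = 0" unfolding eff_res_def True
      using volt_eq[OF wH bV sol_zero bV] .
    show ?thesis using r1 r2 r3 gp True by simp
  next
    case False
    note ab = False
    obtain w where w: "sol V (E - {e}) s t L a b w" using exists_sol[OF wH aV bV] by auto
    obtain u' where u': "sol V (E - {e}) s t L b p u'" using exists_sol[OF wH bV pV] by auto
    define R where "R = w a"
    have Rpos: "R > 0" unfolding R_def by (rule sol_pos[OF wH ab aV bV w])
    have wa0: "w b = 0" and up0: "u p = 0" and u'p0: "u' p = 0" and ga0: "g a = 0"
      using w u u' g unfolding sol_def by auto
    have effR: "eff_res V (E - {e}) s t L a b = R"
      unfolding eff_res_def R_def by (rule volt_eq[OF wH bV w aV])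
    have Rb: "voltage V (E - {e}) s t L b p a = w p" by (rule volt_eq[OF wH bV w pV])
    have wba: "sol V (E - {e}) s t L b a (\<lambda>x. R - w x)"
    proof -
      have eq: "(\<lambda>x. R - w x) = (\<lambda>x. (-1) * w x + 0 * w x + R)" by (simp add: fun_eq_iff)
      have l: "lap (E - {e}) s t L (\<lambda>x. R - w x) v = - lap (E - {e}) s t L w v" for v
        unfolding eq lap_affine by simp
      have "R - w a = 0" by (simp add: R_def)
      then show ?thesis using w ab unfolding sol_def l by auto
    qed
    have Ra: "voltage V (E - {e}) s t L a p b = R - w p" using volt_eq[OF wH aV wba pV] .
    have p1: "sol V E s t L a p (\<lambda>x. u x - (u a - u b) / (L e + R) * (w x - w p))"
      by (rule edge_add[OF fin(2) eE ab sa tb le _ u w R_def]) (use Rpos in simp)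
    have p2: "sol V E s t L b p (\<lambda>x. u' x - (u' a - u' b) / (L e + R) * (w x - w p))"
      by (rule edge_add[OF fin(2) eE ab sa tb le _ u' w R_def]) (use Rpos in simp)
    have lhs1: "eff_res V E s t L a p = u a - (u a - u b) / (L e + R) * (w a - w p)"
      unfolding eff_res_def using volt_eq[OF wG pV p1 aV] by simp
    have lhs2: "eff_res V E s t L b p = u' b - (u' a - u' b) / (L e + R) * (w b - w p)"
      unfolding eff_res_def using volt_eq[OF wG pV p2 bV] by simp
    define \<psi> where "\<psi> = (\<lambda>x. g x + (g b / R) * (w x - R))"
    have \<psi>eq: "\<psi> = (\<lambda>x. 1 * g x + (g b / R) * w x + (- (g b / R) * R))"
      unfolding \<psi>_def by (simp add: fun_eq_iff right_diff_distrib)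
    have lpsi: "lap (E - {e}) s t L \<psi> v = lap (E - {e}) s t L g v + (g b / R) * lap (E - {e}) s t L w v" for v
      unfolding \<psi>eq lap_affine by simp
    have psol: "sol (contr_map a b ` V) (E - {e}) (contr_map a b \<circ> s) (contr_map a b \<circ> t) L (contr_map a b p) a \<psi>"
    proof (rule contr_sol[OF finE' ab])
      show "\<psi> a = 0" unfolding \<psi>_def R_def using ga0 by simp
      show "\<psi> b = 0" unfolding \<psi>_def using wa0 Rpos by simp
      show "\<forall>v\<in>V. v \<noteq> a \<longrightarrow> v \<noteq> b \<longrightarrow> lap (E - {e}) s t L \<psi> v = (if v = p then 1 else 0)"
        using g w unfolding lpsi sol_def by auto
      show "lap (E - {e}) s t L \<psi> a + lap (E - {e}) s t L \<psi> b = (if p = a \<or> p = b then 1 else 0) - 1"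
        using g w aV bV ab unfolding lpsi sol_def by auto
    qed
    have cpV: "contr_map a b p \<in> contr_map a b ` V" using pV by auto
    have caV: "a \<in> contr_map a b ` V"
    proof -
      have "contr_map a b a = a" using ab unfolding contr_map_def by auto
      then show ?thesis using aV by (metis image_eqI)
    qed
    have "eff_res (contr_map a b ` V) (E - {e}) (contr_map a b \<circ> s) (contr_map a b \<circ> t) L (contr_map a b p) a = \<psi> (contr_map a b p)"
      unfolding eff_res_def by (rule volt_eq[OF wB caV psol cpV])
    also have "\<psi> (contr_map a b p) = \<psi> p"
    proof (cases "p = b")
      case True
      have "\<psi> a = 0" unfolding \<psi>_def R_def using ga0 by simp
      moreover have "\<psi> b = 0" unfolding \<psi>_def using wa0 Rpos by simp
      ultimately show ?thesis using True unfolding contr_map_def by simp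
    qed (simp add: contr_map_def)
    finally have rbar: "eff_res (contr_map a b ` V) (E - {e}) (contr_map a b \<circ> s) (contr_map a b \<circ> t) L (contr_map a b p) a
        = g p + (g b / R) * (w p - R)" unfolding \<psi>_def .
    have hB: "g b = R - w p" using recip[OF wH w g aV bV pV aV] ga0 R_def by simp
    have hC: "u b = u a - R + w p" using recip[OF wH u w aV pV aV bV] R_def up0 by simp
    have hD: "u' b = u' a + w p" using recip[OF wH u' w bV pV aV bV] wa0 by simp
    have hE: "u' a = u b" using recip[OF wH u' u bV pV aV pV] up0 u'p0 by simp
    show ?thesis unfolding lhs1 lhs2 rbar effR Ra Rb wa0 R_def[symmetric]
      by (rule alg[OF Rpos le gp hB hC hD hE])
  qed
qed

lemma bridge_half:
  assumes MG: "metrized_graph V E s t L" and eE: "e \<in> E" and sa: "s e = a" and tb: "t e = b"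
    and ab: "a \<noteq> b" and pV: "p \<in> V"
    and XV: "X \<subseteq> V" and Xc: "\<forall>e'\<in>E - {e}. s e' \<in> X \<longleftrightarrow> t e' \<in> X" and pX: "p \<notin> X"
    and x0: "x0 \<in> X" and y0: "y0 \<notin> X" and xy: "(x0 = a \<and> y0 = b) \<or> (x0 = b \<and> y0 = a)"
  shows "eff_res V E s t L y0 p = eff_res (contr_map a b ` V) (E - {e}) (contr_map a b \<circ> s) (contr_map a b \<circ> t) L (contr_map a b p) a
     \<and> eff_res V E s t L x0 p = eff_res (contr_map a b ` V) (E - {e}) (contr_map a b \<circ> s) (contr_map a b \<circ> t) L (contr_map a b p) a + L e"
proof -
  let ?c = "contr_map a b"
  let ?VB = "?c ` V" and ?E' = "E - {e}" and ?sB = "?c \<circ> s" and ?tB = "?c \<circ> t"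
  have wG: "wfg V E s t L" and fin: "finite V" "finite E" and sv: "\<forall>e\<in>E. s e \<in> V \<and> t e \<in> V"
    and Lp: "\<forall>e\<in>E. L e > 0" using mg_wfg[OF MG] by auto
  have le: "L e > 0" using Lp eE by auto
  have aV: "a \<in> V" and bV: "b \<in> V" using sv eE sa tb by auto
  have wB: "wfg ?VB ?E' ?sB ?tB L" using wfg_contr[OF MG eE] sa tb by simp
  have finE': "finite ?E'" using fin by auto
  have sv': "\<forall>e'\<in>?E'. s e' \<in> V \<and> t e' \<in> V" using sv by auto
  have ca: "?c a = a" "?c b = a" using ab unfolding contr_map_def by auto
  have caV: "a \<in> ?VB" using aV ca by (metis image_eqI)
  have cpV: "?c p \<in> ?VB" using pV by auto
  have x0ab: "x0 \<noteq> y0" "x0 \<in> V" "y0 \<in> V" "p \<noteq> x0" using xy ab aV bV x0 pX by auto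
  obtain \<psi> where \<psi>: "sol ?VB ?E' ?sB ?tB L a (?c p) \<psi>" using exists_sol[OF wB caV cpV] by auto
  let ?qa = "\<psi> \<circ> ?c"
  have F1: "lap ?E' s t L ?qa v = - (if v = p then 1 else 0)" if v: "v \<in> V" "v \<noteq> a" "v \<noteq> b" for v
  proof -
    have cv: "?c v = v" using v unfolding contr_map_def by auto
    then have vB: "v \<in> ?VB" using v by (metis image_eqI)
    have "lap ?E' ?sB ?tB L \<psi> v = lap ?E' s t L ?qa v" using contr_lap[OF ab v(3) finE', of s t L \<psi>] v by simp
    moreover have "lap ?E' ?sB ?tB L \<psi> v = (if v = a then 1 else 0) - (if v = ?c p then 1 else 0)"
      using \<psi> vB unfolding sol_def by blast
    moreover have "(v = ?c p) \<longleftrightarrow> v = p" using v unfolding contr_map_def by auto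
    ultimately show ?thesis using v by simp
  qed
  have F2: "lap ?E' s t L ?qa a + lap ?E' s t L ?qa b = 1 - (if p = a \<or> p = b then 1 else 0)"
  proof -
    have "lap ?E' ?sB ?tB L \<psi> a = lap ?E' s t L ?qa a + lap ?E' s t L ?qa b"
      using contr_lap[OF ab ab finE', of s t L \<psi>] by simp
    moreover have "lap ?E' ?sB ?tB L \<psi> a = (if a = a then 1 else 0) - (if a = ?c p then 1 else 0)"
      using \<psi> caV unfolding sol_def by blast
    moreover have "(a = ?c p) \<longleftrightarrow> (p = a \<or> p = b)" unfolding contr_map_def by auto
    ultimately show ?thesis by simp
  qed
  have F3: "lap ?E' s t L ?qa x0 = 0"
  proof -
    have "(\<Sum>v\<in>X. lap ?E' s t L ?qa v) = 0" by (rule sum_closed[OF fin(1) finE' sv' Xc XV])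
    moreover have "finite X" using XV fin finite_subset by blast
    then have "(\<Sum>v\<in>X. lap ?E' s t L ?qa v) = lap ?E' s t L ?qa x0 + (\<Sum>v\<in>X - {x0}. lap ?E' s t L ?qa v)"
      using x0 by (simp add: sum.remove)
    moreover have "(\<Sum>v\<in>X - {x0}. lap ?E' s t L ?qa v) = 0"
    proof (rule sum.neutral, rule ballI)
      fix v assume v: "v \<in> X - {x0}"
      then have "v \<noteq> a" "v \<noteq> b" "v \<in> V" "v \<noteq> p" using xy y0 XV pX by auto
      then show "lap ?E' s t L ?qa v = 0" using F1 by simp
    qed
    ultimately show ?thesis by simp
  qed
  have F4: "lap ?E' s t L ?qa y0 = 1 - (if p = y0 then 1 else 0)"
    using F2 F3 xy x0ab by auto
  have ET: "(if s e = v then (\<phi> v - \<phi> (t e)) / L e else 0) + (if t e = v then (\<phi> v - \<phi> (s e)) / L e else 0)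
      = (if v = x0 then (\<phi> x0 - \<phi> y0) / L e else if v = y0 then (\<phi> y0 - \<phi> x0) / L e else 0)" for \<phi> v
    using xy ab sa tb by auto
  have p0a: "?qa x0 = \<psi> a" "?qa y0 = \<psi> a" using xy ca by auto
  have p0p: "?qa p = 0" using \<psi> unfolding sol_def by simp
  have S0: "sol V E s t L y0 p ?qa"
  proof (rule sol_from_H[OF fin(2) eE])
    show "?qa p = 0" by (rule p0p)
    show "\<forall>v\<in>V. lap ?E' s t L ?qa v + (if s e = v then (?qa v - ?qa (t e)) / L e else 0)
        + (if t e = v then (?qa v - ?qa (s e)) / L e else 0)
        = (if v = y0 then 1 else 0) - (if v = p then 1 else 0)"
    proof
    fix v assume v: "v \<in> V"
    show "lap ?E' s t L ?qa v + (if s e = v then (?qa v - ?qa (t e)) / L e else 0)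
        + (if t e = v then (?qa v - ?qa (s e)) / L e else 0)
        = (if v = y0 then 1 else 0) - (if v = p then 1 else 0)"
    proof (cases "v = a")
      case True
      then show ?thesis using ab xy F3 F4 x0ab ca sa tb by auto
    next
      case na: False
      show ?thesis
      proof (cases "v = b")
        case True
        then show ?thesis using ab xy F3 F4 x0ab ca na sa tb by auto
      next
        case False
        then show ?thesis using F1[OF v] na sa tb xy by auto
      qed
    qed
    qed
  qed
  have r1: "eff_res V E s t L y0 p = \<psi> a"
    unfolding eff_res_def using volt_eq[OF wG pV S0 x0ab(3)] p0a by simp
  let ?qb = "\<lambda>x. ?qa x + L e * (if x \<in> X then 1 else 0)"
  have p1eq: "?qb = (\<lambda>x. 1 * ?qa x + L e * (if x \<in> X then 1 else 0) + 0)" by simp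
  have L1: "lap ?E' s t L ?qb v = lap ?E' s t L ?qa v" for v
    unfolding p1eq lap_affine lap_ind[OF Xc] by (simp add: o_def)
  have p1a: "?qb x0 = \<psi> a + L e" "?qb y0 = \<psi> a" using p0a x0 y0 by auto
  have p1p: "?qb p = 0" using p0p pX by simp
  have d1: "(?qb x0 - ?qb y0) / L e = 1" "(?qb y0 - ?qb x0) / L e = -1" using p1a le by auto
  have S1: "sol V E s t L x0 p ?qb"
  proof (rule sol_from_H[OF fin(2) eE])
    show "?qb p = 0" by (rule p1p)
    show "\<forall>v\<in>V. lap ?E' s t L ?qb v + (if s e = v then (?qb v - ?qb (t e)) / L e else 0)
        + (if t e = v then (?qb v - ?qb (s e)) / L e else 0)
        = (if v = x0 then 1 else 0) - (if v = p then 1 else 0)"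
    proof
    fix v assume v: "v \<in> V"
    show "lap ?E' s t L ?qb v + (if s e = v then (?qb v - ?qb (t e)) / L e else 0)
        + (if t e = v then (?qb v - ?qb (s e)) / L e else 0)
        = (if v = x0 then 1 else 0) - (if v = p then 1 else 0)"
    proof (cases "v = a")
      case True
      then show ?thesis using ab xy F3 F4 x0ab d1 sa tb L1 by auto
    next
      case na: False
      show ?thesis
      proof (cases "v = b")
        case True
        then show ?thesis using ab xy F3 F4 x0ab d1 na sa tb L1 by auto
      next
        case False
        then show ?thesis using F1[OF v] na sa tb L1 xy by auto
      qed
    qed
    qed
  qed
  have r2: "eff_res V E s t L x0 p = \<psi> a + L e"
    unfolding eff_res_def using volt_eq[OF wG pV S1 x0ab(2)] p1a by simp
  obtain \<psi>' where \<psi>': "sol ?VB ?E' ?sB ?tB L (?c p) a \<psi>'" using exists_sol[OF wB cpV caV] by auto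
  have rb: "eff_res ?VB ?E' ?sB ?tB L (?c p) a = \<psi>' (?c p)"
    unfolding eff_res_def by (rule volt_eq[OF wB caV \<psi>' cpV])
  have "\<psi>' (?c p) = \<psi> a"
    using recip[OF wB \<psi> \<psi>' caV cpV cpV caV] \<psi> \<psi>' unfolding sol_def by simp
  then show ?thesis using r1 r2 rb by simp
qed

lemma lim_aux2:
  assumes l: "l > (0::real)"
  shows "((\<lambda>x. c + l * x / (l + x)) \<longlongrightarrow> c + l) at_top"
proof -
  have "filterlim (\<lambda>x. l + x) at_top at_top"
    by (rule filterlim_tendsto_add_at_top[OF tendsto_const filterlim_ident])
  then have "filterlim (\<lambda>x. l + x) at_infinity at_top" by (rule filterlim_at_top_imp_at_infinity)
  then have "((\<lambda>x. l * l / (l + x)) \<longlongrightarrow> 0) at_top" by (rule tendsto_divide_0[OF tendsto_const])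
  then have "((\<lambda>x. c + l - l * l / (l + x)) \<longlongrightarrow> c + l - 0) at_top" by (intro tendsto_intros)
  then have 1: "((\<lambda>x. c + l - l * l / (l + x)) \<longlongrightarrow> c + l) at_top" by simp
  have 2: "\<forall>\<^sub>F x in at_top. c + l - l * l / (l + x) = c + l * x / (l + x)"
    using eventually_ge_at_top[of 0]
  proof eventually_elim
    case (elim x)
    then have "l + x \<noteq> 0" using l by simp
    then show ?case by (simp add: field_simps)
  qed
  show ?thesis by (rule Lim_transform_eventually[OF 1 2])
qed

lemma zero_prod_if: "(y * (if P then 0 else x) * (if P then x else 0)) = (0::real)"
  by auto

lemma bridge:
  assumes MG: "metrized_graph V E s t L" and pV: "p \<in> V" and eE: "e \<in> E"
    and nHc: "\<not> graph_connected V (E - {e}) s t" and sa: "s e = a" and tb: "t e = b"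
  shows "eff_res V E s t L a p + eff_res V E s t L b p =
     2 * eff_res (contr_map a b ` V) (E - {e}) (contr_map a b \<circ> s) (contr_map a b \<circ> t) L (contr_map a b p) a + L e"
proof -
  let ?H = "adj (E - {e}) s t"
  define C where "C = {v. (a, v) \<in> ?H\<^sup>*}"
  have sv: "\<forall>e\<in>E. s e \<in> V \<and> t e \<in> V" and Gc: "graph_connected V E s t" using mg_wfg[OF MG] by auto
  have aV: "a \<in> V" and bV: "b \<in> V" using sv eE sa tb by auto
  have aC: "a \<in> C" unfolding C_def by simp
  have bC: "b \<notin> C"
  proof
    assume "b \<in> C"
    then have ab: "(a, b) \<in> ?H\<^sup>*" unfolding C_def by simp
    have ra: "(a, u) \<in> ?H\<^sup>*" if "u \<in> V" for u
    proof -
      have "(a, u) \<in> (adj E s t)\<^sup>*" using Gc aV that unfolding graph_connected_def by auto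
      then show ?thesis by (rule reach_H[OF _ rtrancl_refl ab sa tb])
    qed
    have "graph_connected V (E - {e}) s t"
      unfolding graph_connected_def
    proof (intro ballI)
      fix u v assume "u \<in> V" "v \<in> V"
      then have "(u, a) \<in> ?H\<^sup>*" "(a, v) \<in> ?H\<^sup>*" using ra[of u] ra[of v] adj_rtrancl_sym[of a u] by auto
      then show "(u, v) \<in> ?H\<^sup>*" by (rule rtrancl_trans)
    qed
    then show False using nHc by simp
  qed
  have ab: "a \<noteq> b" using aC bC by auto
  have cl: "\<forall>e'\<in>E - {e}. s e' \<in> C \<longleftrightarrow> t e' \<in> C" unfolding C_def by (rule comp_closed)
  have sv': "\<forall>e'\<in>E - {e}. s e' \<in> V \<and> t e' \<in> V" using sv by auto
  show ?thesis
  proof (cases "p \<in> C")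
    case True
    have Xc: "\<forall>e'\<in>E - {e}. s e' \<in> V - C \<longleftrightarrow> t e' \<in> V - C"
    proof
      fix e' assume "e' \<in> E - {e}"
      then have "s e' \<in> C \<longleftrightarrow> t e' \<in> C" "s e' \<in> V" "t e' \<in> V" using cl sv' by auto
      then show "s e' \<in> V - C \<longleftrightarrow> t e' \<in> V - C" by auto
    qed
    have "eff_res V E s t L a p = eff_res (contr_map a b ` V) (E - {e}) (contr_map a b \<circ> s) (contr_map a b \<circ> t) L (contr_map a b p) a
     \<and> eff_res V E s t L b p = eff_res (contr_map a b ` V) (E - {e}) (contr_map a b \<circ> s) (contr_map a b \<circ> t) L (contr_map a b p) a + L e"
    proof (rule bridge_half[OF MG eE sa tb ab pV _ Xc])
      show "V - C \<subseteq> V" by auto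
      show "p \<notin> V - C" using True by auto
      show "b \<in> V - C" using bC bV by auto
      show "a \<notin> V - C" using aC by auto
      show "b = a \<and> a = b \<or> b = b \<and> a = a" by simp
    qed
    then show ?thesis by simp
  next
    case False
    have Xc: "\<forall>e'\<in>E - {e}. s e' \<in> V \<inter> C \<longleftrightarrow> t e' \<in> V \<inter> C"
    proof
      fix e' assume "e' \<in> E - {e}"
      then have "s e' \<in> C \<longleftrightarrow> t e' \<in> C" "s e' \<in> V" "t e' \<in> V" using cl sv' by auto
      then show "s e' \<in> V \<inter> C \<longleftrightarrow> t e' \<in> V \<inter> C" by auto
    qed
    have "eff_res V E s t L b p = eff_res (contr_map a b ` V) (E - {e}) (contr_map a b \<circ> s) (contr_map a b \<circ> t) L (contr_map a b p) a
     \<and> eff_res V E s t L a p = eff_res (contr_map a b ` V) (E - {e}) (contr_map a b \<circ> s) (contr_map a b \<circ> t) L (contr_map a b p) a + L e"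
    proof (rule bridge_half[OF MG eE sa tb ab pV _ Xc])
      show "V \<inter> C \<subseteq> V" by auto
      show "p \<notin> V \<inter> C" using False by auto
      show "a \<in> V \<inter> C" using aC aV by auto
      show "b \<notin> V \<inter> C" using bC by auto
      show "a = a \<and> b = b \<or> a = b \<and> b = a" by simp
    qed
    then show ?thesis by simp
  qed
qed

theorem lemma3p1:
  fixes V :: "'v set" and E :: "'e set" and s t :: "'e \<Rightarrow> 'v"
    and L :: "'e \<Rightarrow> real" and p :: 'v and ei :: 'e
  assumes G: "metrized_graph V E s t L" and pV: "p \<in> V" and eE: "ei \<in> E"
  shows
   "let pi = s ei; qi = t ei;
        r = eff_res V E s t L;
        Vbar = contr_map pi qi ` V;
        sbar = contr_map pi qi \<circ> s; tbar = contr_map pi qi \<circ> t;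
        rbar = eff_res Vbar (E - {ei}) sbar tbar L;
        Li = L ei;
        lhs = r pi p + r qi p
    in (graph_connected V (E - {ei}) s t \<longrightarrow>
          (let Ri = eff_res V (E - {ei}) s t L pi qi;
               Ra = voltage V (E - {ei}) s t L pi p qi;
               Rb = voltage V (E - {ei}) s t L qi p pi
           in lhs = 2 * rbar (contr_map pi qi p) pi + Li * Ri / (Li + Ri)
                      - 2 * (Li * Ra * Rb / (Ri * (Li + Ri)))))
     \<and> (\<not> graph_connected V (E - {ei}) s t \<longrightarrow>
          ((\<lambda>Ri. let Ra = (if (pi, p) \<in> (adj (E - {ei}) s t)\<^sup>* then 0 else Ri);
                      Rb = (if (pi, p) \<in> (adj (E - {ei}) s t)\<^sup>* then Ri else 0)
                  in 2 * rbar (contr_map pi qi p) pi + Li * Ri / (Li + Ri)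
                      - 2 * (Li * Ra * Rb / (Ri * (Li + Ri))))
            \<longlongrightarrow> lhs) at_top)"
proof -
  have Lpos: "L ei > 0" using G eE unfolding metrized_graph_def by auto
  show ?thesis
    unfolding Let_def
  proof (intro conjI impI)
    assume Hc: "graph_connected V (E - {ei}) s t"
    show "eff_res V E s t L (s ei) p + eff_res V E s t L (t ei) p =
      2 * eff_res (contr_map (s ei) (t ei) ` V) (E - {ei}) (contr_map (s ei) (t ei) \<circ> s) (contr_map (s ei) (t ei) \<circ> t) L (contr_map (s ei) (t ei) p) (s ei)
      + L ei * eff_res V (E - {ei}) s t L (s ei) (t ei) / (L ei + eff_res V (E - {ei}) s t L (s ei) (t ei))
      - 2 * (L ei * voltage V (E - {ei}) s t L (s ei) p (t ei) * voltage V (E - {ei}) s t L (t ei) p (s ei)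
        / (eff_res V (E - {ei}) s t L (s ei) (t ei) * (L ei + eff_res V (E - {ei}) s t L (s ei) (t ei))))"
      by (rule nonbridge[OF G pV eE Hc refl refl])
  next
    assume nHc: "\<not> graph_connected V (E - {ei}) s t"
    have k: "eff_res V E s t L (s ei) p + eff_res V E s t L (t ei) p =
     2 * eff_res (contr_map (s ei) (t ei) ` V) (E - {ei}) (contr_map (s ei) (t ei) \<circ> s) (contr_map (s ei) (t ei) \<circ> t) L (contr_map (s ei) (t ei) p) (s ei) + L ei"
      by (rule bridge[OF G pV eE nHc refl refl])
    show "((\<lambda>Ri. 2 * eff_res (contr_map (s ei) (t ei) ` V) (E - {ei}) (contr_map (s ei) (t ei) \<circ> s) (contr_map (s ei) (t ei) \<circ> t) L (contr_map (s ei) (t ei) p) (s ei)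
        + L ei * Ri / (L ei + Ri)
        - 2 * (L ei * (if (s ei, p) \<in> (adj (E - {ei}) s t)\<^sup>* then 0 else Ri) * (if (s ei, p) \<in> (adj (E - {ei}) s t)\<^sup>* then Ri else 0) / (Ri * (L ei + Ri))))
       \<longlongrightarrow> eff_res V E s t L (s ei) p + eff_res V E s t L (t ei) p) at_top"
      unfolding k zero_prod_if by (simp add: lim_aux2[OF Lpos])
  qed
qed

end
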